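(* Let $\sigma=\sigma_1\cdots\sigma_k$ be a planar rooted forest (decorated or not) with connected components $\sigma_j=B^+(\tau_j)$, $j=1,\dots,k$, listed from left to right. Then $$\sigma!=|\sigma_1|\cdot|\sigma_1\sigma_2|\cdots|\sigma_1\cdots\sigma_k|\cdot\tau_1!\cdots\tau_k!,$$ where $|\cdot|$ is the number of vertices and $!$ is the planar factorial.
   Context: Planar rooted forests: finite left-to-right ordered sequences of planar rooted trees; $B^+(\tau)$ is the tree obtained by grafting the trees of the planar forest $\tau$, in order, onto a new common root. On vertices, $v<w$ iff $v\neq w$ and $v$ lies on the path from a root to $w$; $\ll$ is the transitive closure of the relation $R$: $vRw$ iff $v<w$, or $v,w$ are children of a common vertex with $v$ to the right of $w$, or $v,w$ are both roots with $v$ to the right of $w$. For a finite poset $P$ and $s<t$, $\Omega^{st}_P=\{(t_v)\in[s,t]^P: t_v\ge t_w \text{ if } v<w\}$ and $P!$ is defined by $\mathrm{Vol}(\Omega^{st}_P)=(t-s)^{|P|}/P!$. The planar factorial is $\sigma!:=(V(\sigma),\ll)!$, with $\emptyset!=1$. *)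

theory Defs
  imports "HOL-Analysis.Analysis"
begin

text \<open>Planar rooted trees, decorated by labels of type 'a (take 'a = unit for
undecorated trees). A planar forest is a list of planar trees (left to right).
Node a ts is B+ of the forest ts (with decoration a at the new root).\<close>
datatype 'a ptree = Node 'a "'a ptree list"

fun children :: "'a ptree \<Rightarrow> 'a ptree list" where
  "children (Node a ts) = ts"

text \<open>Vertices of a forest, encoded as addresses: [i0,i1,...,im] is the vertex reached
from the i0-th root (0 = leftmost) by successively going to the i1-th child, etc.
fv n ts lists vertices of ts whose root indices are offset by n.\<close>
fun fv :: "nat \<Rightarrow> 'a ptree list \<Rightarrow> nat list set" where
  "fv n [] = {}"
| "fv n (Node a cs # ts) = insert [n] ((Cons n) ` fv 0 cs) \<union> fv (Suc n) ts"

definition fverts :: "'a ptree list \<Rightarrow> nat list set" where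
  "fverts \<sigma> = fv 0 \<sigma>"

definition nverts :: "'a ptree list \<Rightarrow> nat" where
  "nverts \<sigma> = card (fverts \<sigma>)"

definition tree_below :: "nat list \<Rightarrow> nat list \<Rightarrow> bool" where
  "tree_below v w \<longleftrightarrow> (\<exists>u. u \<noteq> [] \<and> w = v @ u)"

text \<open>The relation R: v < w, or v and w are siblings (children of a common vertex,
or both roots) with v to the right of w.\<close>
definition relR :: "nat list \<Rightarrow> nat list \<Rightarrow> bool" where
  "relR v w \<longleftrightarrow> tree_below v w \<or> (\<exists>p i j. v = p @ [i] \<and> w = p @ [j] \<and> j < i)"

definition planar_order :: "'a ptree list \<Rightarrow> (nat list \<times> nat list) set" where
  "planar_order \<sigma> = {(v, w). v \<in> fverts \<sigma> \<and> w \<in> fverts \<sigma> \<and> relR v w}\<^sup>+"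

text \<open>Poset factorial: P! with Vol(\<Omega>^{st}_P) = (t-s)^|P| / P!; taken with s = 0, t = 1,
where \<Omega> is the order polytope in [0,1]^P (points indexed by the carrier V) and the
volume is the Lebesgue (product) measure on V \<rightarrow> real.\<close>
definition order_polytope :: "'v set \<Rightarrow> ('v \<times> 'v) set \<Rightarrow> real \<Rightarrow> real \<Rightarrow> ('v \<Rightarrow> real) set" where
  "order_polytope V r s t =
     {x \<in> V \<rightarrow>\<^sub>E {s..t}. \<forall>v\<in>V. \<forall>w\<in>V. (v, w) \<in> r \<longrightarrow> x w \<le> x v}"

definition poset_factorial :: "'v set \<Rightarrow> ('v \<times> 'v) set \<Rightarrow> real" where
  "poset_factorial V r = 1 / measure (PiM V (\<lambda>_. lborel)) (order_polytope V r 0 1)"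

definition planar_factorial :: "'a ptree list \<Rightarrow> real" where
  "planar_factorial \<sigma> = poset_factorial (fverts \<sigma>) (planar_order \<sigma>)"

end

theory Submission
  imports Defs
begin


lemma op_sets:
  assumes "finite A"
  shows "order_polytope A r 0 y \<in> sets (Pi\<^sub>M A (\<lambda>_. lborel))"
proof -
  have "order_polytope A r 0 y = {x \<in> space (Pi\<^sub>M A (\<lambda>_. lborel)).
          (\<forall>v\<in>A. 0 \<le> x v \<and> x v \<le> y) \<and> (\<forall>v\<in>A. \<forall>w\<in>A. (v, w) \<in> r \<longrightarrow> x w \<le> x v)}"
    by (auto simp: order_polytope_def space_PiM PiE_def)
  also have "\<dots> \<in> sets (Pi\<^sub>M A (\<lambda>_. lborel))"
  proof -
    have [measurable]: "Measurable.pred (Pi\<^sub>M A (\<lambda>_. lborel)) (\<lambda>x. x w \<le> (x v::real))" if "v \<in> A" "w \<in> A" for v w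
      unfolding pred_def
      by (rule borel_measurable_le) (use that in \<open>auto intro!: measurable_component_singleton simp: measurable_lborel2\<close>)
    show ?thesis using assms by measurable
  qed
  finally show ?thesis .
qed

lemma op_space: "order_polytope A r 0 y \<subseteq> space (Pi\<^sub>M A (\<lambda>_. lborel))"
  by (auto simp: order_polytope_def space_PiM PiE_def)

lemma emeasure_op_split:
  fixes A B :: "'v set" and m :: 'v
  assumes fin: "finite A" "finite B" and disj: "A \<inter> B = {}" and mAB: "m \<notin> A \<union> B"
    and h1: "\<And>w. w \<in> A \<union> B \<Longrightarrow> (m, w) \<in> r"
    and h2: "\<And>v. (v, m) \<notin> r"
    and h3: "\<And>v w. v \<in> A \<Longrightarrow> w \<in> B \<Longrightarrow> (v, w) \<notin> r \<and> (w, v) \<notin> r"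
  shows "emeasure (Pi\<^sub>M (insert m (A \<union> B)) (\<lambda>_. lborel)) (order_polytope (insert m (A \<union> B)) r 0 t)
     = (\<integral>\<^sup>+ y. indicator {0..t} y * (emeasure (Pi\<^sub>M A (\<lambda>_. lborel)) (order_polytope A r 0 y)
          * emeasure (Pi\<^sub>M B (\<lambda>_. lborel)) (order_polytope B r 0 y)) \<partial>lborel)"
proof -
  let ?M = "\<lambda>A. (Pi\<^sub>M A (\<lambda>_. lborel::real measure))"
  let ?W = "insert m (A \<union> B)"
  interpret product_sigma_finite "\<lambda>_. lborel::real measure" by standard
  have finW: "finite (A \<union> B)" using fin by auto
  note meas[measurable] = op_sets[OF fin(1)] op_sets[OF fin(2)] op_sets[OF finite.insertI[OF finW]]
  define T where "T y = {x \<in> space (?M (A \<union> B)). restrict x A \<in> order_polytope A r 0 y \<and>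
      restrict x B \<in> order_polytope B r 0 y}" for y
  have Tsets: "T y \<in> sets (?M (A \<union> B))" for y
  proof -
    have "T y = ((\<lambda>x. restrict x A) -` order_polytope A r 0 y \<inter> space (?M (A \<union> B)))
           \<inter> ((\<lambda>x. restrict x B) -` order_polytope B r 0 y \<inter> space (?M (A \<union> B)))"
      by (auto simp: T_def)
    also have "\<dots> \<in> sets (?M (A \<union> B))"
      by (intro sets.Int measurable_sets[OF measurable_restrict_subset] meas) auto
    finally show ?thesis .
  qed
  have key: "indicator (order_polytope ?W r 0 t) (x(m := y)) = (indicator {0..t} y * indicator (T y) x :: ennreal)"
    if x: "x \<in> space (?M (A \<union> B))" for x y
  proof -
    have xe: "x \<in> (A \<union> B) \<rightarrow>\<^sub>E UNIV" using x by (simp add: space_PiM)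
    have "x(m := y) \<in> order_polytope ?W r 0 t \<longleftrightarrow> y \<in> {0..t} \<and> x \<in> T y"
    proof
      assume H: "x(m := y) \<in> order_polytope ?W r 0 t"
      have "(x(m := y)) m \<in> {0..t}" using H unfolding order_polytope_def PiE_def Pi_def by blast
      then have y: "y \<in> {0..t}" by simp
      have le: "x w \<le> y" if "w \<in> A \<union> B" for w
        using H h1[OF that] that mAB unfolding order_polytope_def
        by (smt (verit, ccfv_threshold) fun_upd_apply insertCI mem_Collect_eq)
      show "y \<in> {0..t} \<and> x \<in> T y"
      proof -
        have c: "(x(m := y)) w \<le> (x(m := y)) v" if "v \<in> ?W" "w \<in> ?W" "(v, w) \<in> r" for v w
          using H that unfolding order_polytope_def by blast
        have c': "x w \<le> x v" if "v \<in> A \<union> B" "w \<in> A \<union> B" "(v, w) \<in> r" for v w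
          using c[of v w] that mAB by (auto split: if_splits)
        have nn: "0 \<le> x v" if "v \<in> A \<union> B" for v
        proof -
          have "(x(m := y)) v \<in> {0..t}" using H that unfolding order_polytope_def PiE_def Pi_def by blast
          then show ?thesis using that mAB by (auto split: if_splits)
        qed
        show ?thesis
          using y le nn c' x unfolding T_def order_polytope_def
          by (auto simp: PiE_iff space_PiM)
      qed
    next
      assume H: "y \<in> {0..t} \<and> x \<in> T y"
      show "x(m := y) \<in> order_polytope ?W r 0 t"
        unfolding order_polytope_def
      proof (intro CollectI conjI ballI impI)
        show "x(m := y) \<in> ?W \<rightarrow>\<^sub>E {0..t}" using H xe unfolding T_def order_polytope_def
          by (auto simp: PiE_iff)
        have xA: "\<forall>v\<in>A. 0 \<le> x v \<and> x v \<le> y" "\<forall>v\<in>A. \<forall>w\<in>A. (v,w) \<in> r \<longrightarrow> x w \<le> x v"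
          and xB: "\<forall>v\<in>B. 0 \<le> x v \<and> x v \<le> y" "\<forall>v\<in>B. \<forall>w\<in>B. (v,w) \<in> r \<longrightarrow> x w \<le> x v"
          using H unfolding T_def order_polytope_def PiE_iff by auto
        show "(x(m := y)) w \<le> (x(m := y)) v" if "v \<in> ?W" "w \<in> ?W" "(v, w) \<in> r" for v w
        proof -
          have "w \<noteq> m" using h2 that by blast
          show ?thesis
          proof (cases "v = m")
            case True
            then show ?thesis using \<open>w \<noteq> m\<close> that xA xB by auto
          next
            case False
            then show ?thesis using \<open>w \<noteq> m\<close> that xA xB h3 by auto
          qed
        qed
      qed
    qed
    then show ?thesis by (auto simp: indicator_def)
  qed
  have Tmeas: "emeasure (?M (A \<union> B)) (T y) = emeasure (?M A) (order_polytope A r 0 y)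
          * emeasure (?M B) (order_polytope B r 0 y)" for y
  proof -
    interpret PA: finite_product_sigma_finite "\<lambda>_. lborel::real measure" B by standard (rule fin)
    have "emeasure (?M (A \<union> B)) (T y) = emeasure (distr (?M A \<Otimes>\<^sub>M ?M B) (?M (A \<union> B)) (merge A B)) (T y)"
      using distr_merge[OF disj fin] by simp
    also have "\<dots> = emeasure (?M A \<Otimes>\<^sub>M ?M B) (merge A B -` T y \<inter> space (?M A \<Otimes>\<^sub>M ?M B))"
      by (rule emeasure_distr) (auto intro: Tsets)
    also have "merge A B -` T y \<inter> space (?M A \<Otimes>\<^sub>M ?M B) = order_polytope A r 0 y \<times> order_polytope B r 0 y"
    proof -
      have e: "restrict a A = a" if "a \<in> space (?M A)" for a
        using that by (simp add: space_PiM PiE_restrict)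
      have e2: "restrict b B = b" if "b \<in> space (?M B)" for b
        using that by (simp add: space_PiM PiE_restrict)
      have s: "merge A B (a, b) \<in> space (?M (A \<union> B))" for a b
        by (simp add: space_PiM PiE_iff)
      show ?thesis
        using op_space[of A r y] op_space[of B r y] disj e e2 s
        by (auto simp: T_def space_pair_measure)
    qed
    also have "emeasure (?M A \<Otimes>\<^sub>M ?M B) \<dots> = emeasure (?M A) (order_polytope A r 0 y)
          * emeasure (?M B) (order_polytope B r 0 y)"
      by (rule PA.emeasure_pair_measure_Times) (auto intro: meas)
    finally show ?thesis .
  qed
  have "emeasure (?M ?W) (order_polytope ?W r 0 t) = (\<integral>\<^sup>+ x. indicator (order_polytope ?W r 0 t) x \<partial>?M ?W)"
    by (simp add: meas)
  also have "\<dots> = (\<integral>\<^sup>+ y. \<integral>\<^sup>+ x. indicator (order_polytope ?W r 0 t) (x(m := y)) \<partial>?M (A \<union> B) \<partial>lborel)"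
    using finW mAB by (intro product_nn_integral_insert_rev) auto
  also have "\<dots> = (\<integral>\<^sup>+ y. \<integral>\<^sup>+ x. indicator {0..t} y * indicator (T y) x \<partial>?M (A \<union> B) \<partial>lborel)"
    by (intro nn_integral_cong) (simp add: key)
  also have "\<dots> = (\<integral>\<^sup>+ y. indicator {0..t} y * (\<integral>\<^sup>+ x. indicator (T y) x \<partial>?M (A \<union> B)) \<partial>lborel)"
    by (intro nn_integral_cong nn_integral_cmult borel_measurable_indicator Tsets)
  also have "\<dots> = (\<integral>\<^sup>+ y. indicator {0..t} y * emeasure (?M (A \<union> B)) (T y) \<partial>lborel)"
    by (intro nn_integral_cong) (simp add: Tsets)
  finally show ?thesis by (simp add: Tmeas)
qed



lemma fv_append: "fv n (xs @ ys) = fv n xs \<union> fv (n + length xs) ys"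
proof (induction xs arbitrary: n)
  case Nil then show ?case by simp
next
  case (Cons t xs)
  obtain a cs where t: "t = Node a cs" by (cases t)
  show ?case using Cons[of "Suc n"] by (auto simp: t)
qed

lemma fv_mem: "x \<in> fv n ts \<Longrightarrow> \<exists>h u. x = h # u \<and> n \<le> h \<and> h < n + length ts"
proof (induction ts arbitrary: n x)
  case Nil then show ?case by simp
next
  case (Cons t ts)
  obtain a cs where t: "t = Node a cs" by (cases t)
  show ?case using Cons.prems Cons.IH by (force simp: t)
qed

lemma fv_finite: "finite (fv n ts)"
  by (induction n ts rule: fv.induct) auto

lemma fv_prefix: "p @ [j] @ u \<in> fv n ts \<Longrightarrow> p @ [j] \<in> fv n ts"
proof (induction n ts arbitrary: p rule: fv.induct)
  case (1 n) then show ?case by simp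
next
  case (2 n a cs ts)
  show ?case
  proof (cases "p @ [j] @ u \<in> fv (Suc n) ts")
    case True then show ?thesis using 2 by auto
  next
    case False
    then have "p @ [j] @ u = [n] \<or> p @ [j] @ u \<in> Cons n ` fv 0 cs" using 2(3) by auto
    then show ?thesis
    proof
      assume "p @ [j] @ u = [n]" then show ?thesis by (cases p) auto
    next
      assume "p @ [j] @ u \<in> Cons n ` fv 0 cs"
      then obtain y where y: "y \<in> fv 0 cs" "p @ [j] @ u = n # y" by auto
      show ?thesis
      proof (cases p)
        case Nil then show ?thesis using y by auto
      next
        case (Cons h p')
        then have "y = p' @ [j] @ u" "h = n" using y by auto
        then show ?thesis using 2(1)[of p'] y Cons by auto
      qed
    qed
  qed
qed

lemma fverts_snoc: "fverts (\<sigma> @ [Node a cs]) = insert [length \<sigma>] (fverts \<sigma> \<union> Cons (length \<sigma>) ` fverts cs)"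
  by (auto simp: fverts_def fv_append)

definition Qrel :: "nat list \<Rightarrow> nat list \<Rightarrow> bool" where
  "Qrel v w \<longleftrightarrow> (\<exists>p i j u. v = p @ [i] \<and> w = p @ [j] @ u \<and> j \<le> i \<and> (j < i \<or> u \<noteq> []))"

definition QR :: "nat list set \<Rightarrow> (nat list \<times> nat list) set" where
  "QR S = {(v, w). v \<in> S \<and> w \<in> S \<and> Qrel v w}"

lemma Q_irrefl: "\<not> Qrel v v"
  unfolding Qrel_def by auto

lemma Q_nil: "\<not> Qrel v []" "\<not> Qrel [] w"
  unfolding Qrel_def by auto

lemma Q_cons_diff: "Qrel (x # a) (y # b) \<Longrightarrow> x \<noteq> y \<Longrightarrow> a = [] \<and> y < x"
  unfolding Qrel_def by (auto simp: Cons_eq_append_conv)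

lemma Q_cons_same: "a \<noteq> [] \<Longrightarrow> Qrel (x # a) (x # b) \<longleftrightarrow> Qrel a b"
proof
  assume a: "a \<noteq> []" and "Qrel (x # a) (x # b)"
  then obtain p i j u where h: "x # a = p @ [i]" "x # b = p @ [j] @ u" "j \<le> i" "j < i \<or> u \<noteq> []"
    unfolding Qrel_def by blast
  obtain p' where p: "p = x # p'" using h(1) a by (cases p) auto
  show "Qrel a b" unfolding Qrel_def using h p by auto
next
  assume "Qrel a b"
  then obtain p i j u where h: "a = p @ [i]" "b = p @ [j] @ u" "j \<le> i" "j < i \<or> u \<noteq> []"
    unfolding Qrel_def by blast
  show "Qrel (x # a) (x # b)" unfolding Qrel_def
    by (rule exI[of _ "x # p"]) (use h in auto)
qed

lemma Q_prefix: "a \<noteq> [] \<Longrightarrow> Qrel (q @ a) (q @ b) \<longleftrightarrow> Qrel a b"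
  by (induction q) (auto simp: Q_cons_same)

lemma Q_trans:
  assumes "Qrel u v" "Qrel v w" shows "Qrel u w"
proof -
  obtain p i j z where h: "u = p @ [i]" "v = p @ [j] @ z" "j \<le> i" "j < i \<or> z \<noteq> []"
    using assms(1) unfolding Qrel_def by blast
  obtain p2 i2 j2 z2 where g: "v = p2 @ [i2]" "w = p2 @ [j2] @ z2" "j2 \<le> i2" "j2 < i2 \<or> z2 \<noteq> []"
    using assms(2) unfolding Qrel_def by blast
  show ?thesis
  proof (cases "z = []")
    case True
    then have "p2 = p" "i2 = j" using h(2) g(1) by auto
    then show ?thesis unfolding Qrel_def using h g True
      by (intro exI[of _ p] exI[of _ i] exI[of _ j2] exI[of _ z2]) auto
  next
    case False
    then have z: "z = butlast z @ [last z]" by simp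
    then have "p2 = p @ [j] @ butlast z" "i2 = last z" using h(2) g(1)
      by (metis append_assoc append1_eq_conv)+
    then show ?thesis unfolding Qrel_def using h g
      by (intro exI[of _ p] exI[of _ i] exI[of _ j] exI[of _ "butlast z @ [j2] @ z2"]) auto
  qed
qed

lemma fverts_ne: "v \<in> fverts \<sigma> \<Longrightarrow> v \<noteq> []"
  unfolding fverts_def using fv_mem by blast

lemma relR_Q: "v \<noteq> [] \<Longrightarrow> relR v w \<Longrightarrow> Qrel v w"
  unfolding relR_def tree_below_def Qrel_def
proof (elim disjE exE conjE)
  fix u assume "v \<noteq> []" "u \<noteq> []" "w = v @ u"
  then show "\<exists>p i j u. v = p @ [i] \<and> w = p @ [j] @ u \<and> j \<le> i \<and> (j < i \<or> u \<noteq> [])"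
    by (intro exI[of _ "butlast v"] exI[of _ "last v"] exI[of _ "last v"] exI[of _ u]) auto
qed auto

lemma po_eq: "planar_order \<sigma> = QR (fverts \<sigma>)"
proof
  show "planar_order \<sigma> \<subseteq> QR (fverts \<sigma>)"
  proof
    fix x assume "x \<in> planar_order \<sigma>"
    then obtain v w where x: "x = (v, w)" and tr: "(v, w) \<in> {(v, w). v \<in> fverts \<sigma> \<and> w \<in> fverts \<sigma> \<and> relR v w}\<^sup>+"
      unfolding planar_order_def by (cases x) auto
    from tr have "(v, w) \<in> QR (fverts \<sigma>)"
    proof (induction rule: trancl_induct)
      case (base y) then show ?case using relR_Q fverts_ne unfolding QR_def by auto
    next
      case (step y z) then show ?case using relR_Q fverts_ne Q_trans unfolding QR_def by blast
    qed
    then show "x \<in> QR (fverts \<sigma>)" using x by simp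
  qed
next
  show "QR (fverts \<sigma>) \<subseteq> planar_order \<sigma>"
  proof
    fix x assume "x \<in> QR (fverts \<sigma>)"
    then obtain v w where x: "x = (v, w)" and vw: "v \<in> fverts \<sigma>" "w \<in> fverts \<sigma>" "Qrel v w"
      unfolding QR_def by auto
    then obtain p i j u where h: "v = p @ [i]" "w = p @ [j] @ u" "j \<le> i" "j < i \<or> u \<noteq> []"
      unfolding Qrel_def by blast
    let ?R = "{(v, w). v \<in> fverts \<sigma> \<and> w \<in> fverts \<sigma> \<and> relR v w}"
    have pj: "p @ [j] \<in> fverts \<sigma>" using vw(2) h(2) fv_prefix unfolding fverts_def by blast
    have s1: "(v, p @ [j]) \<in> ?R" if "j < i"
      using that vw pj h unfolding relR_def by blast
    have s2: "(p @ [j], w) \<in> ?R" if "u \<noteq> []"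
      using that vw pj h unfolding relR_def tree_below_def by auto
    have "(v, w) \<in> ?R\<^sup>+"
    proof (cases "u = []")
      case True then show ?thesis using s1 h by auto
    next
      case False
      show ?thesis
      proof (cases "j < i")
        case True then show ?thesis using s1 s2 False by (meson trancl.simps)
      next
        case f2: False
        then have "i = j" using h by auto
        then show ?thesis using s2 False h by auto
      qed
    qed
    then show "x \<in> planar_order \<sigma>" unfolding planar_order_def x .
  qed
qed

definition pre :: "nat list \<Rightarrow> 'a ptree list \<Rightarrow> nat list set" where
  "pre q \<sigma> = (append q) ` fverts \<sigma>"

lemma pre_snoc: "pre q (\<sigma> @ [Node a cs]) = insert (q @ [length \<sigma>]) (pre q \<sigma> \<union> pre (q @ [length \<sigma>]) cs)"
  unfolding pre_def fverts_snoc by (auto simp: image_image)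

lemma pre_finite: "finite (pre q \<sigma>)"
  unfolding pre_def fverts_def by (simp add: fv_finite)

lemma card_pre: "card (pre q \<sigma>) = nverts \<sigma>"
  unfolding pre_def nverts_def by (rule card_image) (simp add: inj_on_def)

lemma fverts_hd: "v \<in> fverts \<sigma> \<Longrightarrow> \<exists>h u. v = h # u \<and> h < length \<sigma>"
  unfolding fverts_def using fv_mem by fastforce

lemma pre_nil: "pre q [] = {}"
  by (simp add: pre_def fverts_def)

lemma op_QR_sub: "A \<subseteq> W \<Longrightarrow> order_polytope A (QR W) s t = order_polytope A (QR A) s t"
  unfolding order_polytope_def QR_def by blast

lemma split_facts:
  fixes \<sigma> cs :: "'a ptree list" and q :: "nat list" and a :: 'a
  assumes k_def: "k = length \<sigma>"
  assumes A_def: "A = pre q \<sigma>" and B_def: "B = pre (q @ [k]) cs"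
  assumes W_def: "W = pre q (\<sigma> @ [Node a cs])"
  shows "A \<inter> B = {}" "q @ [k] \<notin> A \<union> B"
    "\<And>w. w \<in> A \<union> B \<Longrightarrow> (q @ [k], w) \<in> QR W"
    "\<And>v. (v, q @ [k]) \<notin> QR W"
    "\<And>v w. v \<in> A \<Longrightarrow> w \<in> B \<Longrightarrow> (v, w) \<notin> QR W \<and> (w, v) \<notin> QR W"
proof -
  have W: "W = insert (q @ [k]) (A \<union> B)" unfolding W_def A_def B_def k_def by (rule pre_snoc)
  have Ah: "\<exists>h u. x = q @ (h # u) \<and> h < k" if "x \<in> A" for x
    using that fverts_hd unfolding A_def pre_def k_def by blast
  have Bh: "\<exists>u. x = q @ (k # u) \<and> u \<noteq> []" if "x \<in> B" for x
    using that fverts_ne unfolding B_def pre_def by fastforce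
  show "A \<inter> B = {}" using Ah Bh by fastforce
  show "q @ [k] \<notin> A \<union> B" using Ah Bh by fastforce
  show "(q @ [k], w) \<in> QR W" if wAB: "w \<in> A \<union> B" for w
  proof -
    have "Qrel (q @ [k]) w"
    proof (cases "w \<in> A")
      case True
      then obtain h u where "w = q @ (h # u)" "h < k" using Ah by blast
      then show ?thesis unfolding Q_prefix[of "[k]" q, simplified, symmetric] Qrel_def
        by (intro exI[of _ q] exI[of _ k] exI[of _ h] exI[of _ u]) auto
    next
      case False
      then obtain u where "w = q @ (k # u)" "u \<noteq> []" using Bh wAB by blast
      then show ?thesis unfolding Qrel_def
        by (intro exI[of _ q] exI[of _ k] exI[of _ k] exI[of _ u]) auto
    qed
    then show ?thesis using wAB W unfolding QR_def by auto
  qed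
  show "(v, q @ [k]) \<notin> QR W" for v
  proof
    assume "(v, q @ [k]) \<in> QR W"
    then have vW: "v \<in> W" and Q: "Qrel v (q @ [k])" unfolding QR_def by auto
    have "\<exists>h u. v = q @ (h # u) \<and> h \<le> k" using vW W Ah Bh by fastforce
    then obtain h u where v: "v = q @ (h # u)" "h \<le> k" by blast
    then have Q': "Qrel (h # u) [k]" using Q Q_prefix[of "h # u" q "[k]"] by simp
    show False
    proof (cases "h = k")
      case True
      then show False using Q' Q_irrefl Q_cons_same[of u k "[]"] Q_nil by (cases "u = []") auto
    next
      case False
      then show False using Q_cons_diff[OF Q' False] v by auto
    qed
  qed
  show "(v, w) \<notin> QR W \<and> (w, v) \<notin> QR W" if vw: "v \<in> A" "w \<in> B" for v w
  proof -
    obtain h u where v: "v = q @ (h # u)" "h < k" using Ah vw by blast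
    obtain u' where w: "w = q @ (k # u')" "u' \<noteq> []" using Bh vw by blast
    have "\<not> Qrel (h # u) (k # u')" using Q_cons_diff[of h u k u'] v by auto
    moreover have "\<not> Qrel (k # u') (h # u)" using Q_cons_diff[of k u' h u] v w by auto
    ultimately show ?thesis using Q_prefix[of "h # u" q "k # u'"] Q_prefix[of "k # u'" q "h # u"] v w
      unfolding QR_def by auto
  qed
qed

lemma op_empty: "order_polytope {} r 0 t = {\<lambda>_. undefined}"
  unfolding order_polytope_def by auto

lemma step:
  fixes \<sigma>' cs :: "'a ptree list" and a :: 'a
  assumes cA: "cA > 0" "\<And>q t. 0 \<le> t \<Longrightarrow> emeasure (Pi\<^sub>M (pre q \<sigma>') (\<lambda>_. lborel))
     (order_polytope (pre q \<sigma>') (QR (pre q \<sigma>')) 0 t) = ennreal (t ^ nverts \<sigma>' * cA)"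
  assumes cB: "cB > 0" "\<And>q t. 0 \<le> t \<Longrightarrow> emeasure (Pi\<^sub>M (pre q cs) (\<lambda>_. lborel))
     (order_polytope (pre q cs) (QR (pre q cs)) 0 t) = ennreal (t ^ nverts cs * cB)"
  assumes s: "\<sigma> = \<sigma>' @ [Node a cs]"
  shows "cA * cB / nverts \<sigma> > 0 \<and> (\<forall>q t. 0 \<le> t \<longrightarrow> emeasure (Pi\<^sub>M (pre q \<sigma>) (\<lambda>_. lborel))
     (order_polytope (pre q \<sigma>) (QR (pre q \<sigma>)) 0 t) = ennreal (t ^ nverts \<sigma> * (cA * cB / nverts \<sigma>)))"
proof -
  define k where "k = length \<sigma>'"
  define nA where "nA = nverts \<sigma>'"
  define nB where "nB = nverts cs"
  define n where "n = nA + nB"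
  have cardW: "nverts \<sigma> = Suc n"
  proof -
    define A where "A = pre [] \<sigma>'"
    define B where "B = pre ([] @ [k]) cs"
    define W where "W = pre [] \<sigma>"
    have W: "W = insert ([] @ [k]) (A \<union> B)" unfolding W_def A_def B_def k_def s by (rule pre_snoc)
    have Wd: "W = pre [] (\<sigma>' @ [Node a cs])" unfolding W_def s ..
    note sf = split_facts[OF k_def A_def B_def Wd]
    have "nverts \<sigma> = card W" unfolding W_def by (simp add: card_pre)
    also have "\<dots> = Suc (card A + card B)" unfolding W using sf(1,2)
      by (simp add: card_Un_disjoint A_def B_def pre_finite)
    finally show ?thesis by (simp add: n_def nA_def nB_def A_def B_def card_pre)
  qed
  show ?thesis
    unfolding cardW
  proof (intro conjI allI impI)
    show "cA * cB / (Suc n) > 0" using cA cB by simp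
    fix q and t :: real assume t: "0 \<le> t"
    define A where "A = pre q \<sigma>'"
    define B where "B = pre (q @ [k]) cs"
    define W where "W = pre q \<sigma>"
    have W: "W = insert (q @ [k]) (A \<union> B)" unfolding W_def A_def B_def k_def s by (rule pre_snoc)
    have Wd: "W = pre q (\<sigma>' @ [Node a cs])" unfolding W_def s ..
    note sf = split_facts[OF k_def A_def B_def Wd]
    have "emeasure (Pi\<^sub>M W (\<lambda>_. lborel)) (order_polytope W (QR W) 0 t)
       = (\<integral>\<^sup>+ y. indicator {0..t} y * (emeasure (Pi\<^sub>M A (\<lambda>_. lborel)) (order_polytope A (QR W) 0 y)
        * emeasure (Pi\<^sub>M B (\<lambda>_. lborel)) (order_polytope B (QR W) 0 y)) \<partial>lborel)"
      unfolding W by (rule emeasure_op_split) (use sf pre_finite A_def B_def W in auto)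
    also have "\<dots> = (\<integral>\<^sup>+ y. ennreal (cA * cB * y ^ n) * indicator {0..t} y \<partial>lborel)"
    proof (intro nn_integral_cong)
      fix y :: real
      show "indicator {0..t} y * (emeasure (Pi\<^sub>M A (\<lambda>_. lborel)) (order_polytope A (QR W) 0 y)
        * emeasure (Pi\<^sub>M B (\<lambda>_. lborel)) (order_polytope B (QR W) 0 y)) = ennreal (cA * cB * y ^ n) * indicator {0..t} y"
      proof (cases "y \<in> {0..t}")
        case True
        have "order_polytope A (QR W) 0 y = order_polytope A (QR A) 0 y"
          by (rule op_QR_sub) (auto simp: W)
        moreover have "order_polytope B (QR W) 0 y = order_polytope B (QR B) 0 y"
          by (rule op_QR_sub) (auto simp: W)
        ultimately show ?thesis using True cA(2)[of y q] cB(2)[of y "q @ [k]"] cA(1) cB(1)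
          by (simp add: A_def B_def ennreal_mult'[symmetric] n_def nA_def nB_def power_add mult_ac)
      qed simp
    qed
    also have "\<dots> = ennreal (cA * cB / Suc n * t ^ Suc n - cA * cB / Suc n * 0 ^ Suc n)"
    proof (rule nn_integral_FTC_Icc)
      fix y :: real
      have "((\<lambda>y. y ^ Suc n) has_real_derivative real (Suc n) * y ^ n) (at y)"
        using DERIV_pow[of "Suc n" y] by simp
      from DERIV_cmult[OF this, of "cA * cB / Suc n"]
      have "((\<lambda>y. cA * cB / Suc n * y ^ Suc n) has_real_derivative cA * cB / Suc n * (real (Suc n) * y ^ n)) (at y)" .
      moreover have "cA * cB / Suc n * (real (Suc n) * y ^ n) = cA * cB * y ^ n"
        by (simp del: of_nat_Suc)
      ultimately show "((\<lambda>y. cA * cB / Suc n * y ^ Suc n) has_real_derivative cA * cB * y ^ n) (at y)"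
        by metis
      assume "y \<in> {0..t}"
      then show "0 \<le> cA * cB * y ^ n" using cA(1) cB(1) by simp
    qed (use t in auto)
    also have "\<dots> = ennreal (t ^ Suc n * (cA * cB / Suc n))"
      by (simp add: field_simps)
    finally show "emeasure (Pi\<^sub>M (pre q \<sigma>) (\<lambda>_. lborel)) (order_polytope (pre q \<sigma>) (QR (pre q \<sigma>)) 0 t)
        = ennreal (t ^ Suc n * (cA * cB / Suc n))" unfolding W_def .
  qed
qed

lemma claim:
  fixes \<sigma> :: "'a ptree list"
  shows "\<exists>c>0. \<forall>q t. 0 \<le> t \<longrightarrow> emeasure (Pi\<^sub>M (pre q \<sigma>) (\<lambda>_. lborel))
     (order_polytope (pre q \<sigma>) (QR (pre q \<sigma>)) 0 t) = ennreal (t ^ nverts \<sigma> * c)"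
proof (induction \<sigma> rule: measure_induct_rule[of "size_list size"])
  case (less \<sigma>)
  show ?case
  proof (cases \<sigma> rule: rev_exhaust)
    case Nil
    show ?thesis
      by (intro exI[of _ 1]) (simp add: Nil pre_nil op_empty nverts_def fverts_def)
  next
    case (snoc \<sigma>' t0)
    obtain a cs where t0: "t0 = Node a cs" by (cases t0)
    have s: "\<sigma> = \<sigma>' @ [Node a cs]" using snoc t0 by simp
    obtain cA where cA: "cA > 0" "\<And>q t. 0 \<le> t \<Longrightarrow> emeasure (Pi\<^sub>M (pre q \<sigma>') (\<lambda>_. lborel))
     (order_polytope (pre q \<sigma>') (QR (pre q \<sigma>')) 0 t) = ennreal (t ^ nverts \<sigma>' * cA)"
      using less[of \<sigma>'] s by auto
    obtain cB where cB: "cB > 0" "\<And>q t. 0 \<le> t \<Longrightarrow> emeasure (Pi\<^sub>M (pre q cs) (\<lambda>_. lborel))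
     (order_polytope (pre q cs) (QR (pre q cs)) 0 t) = ennreal (t ^ nverts cs * cB)"
      using less[of cs] s by auto
    show ?thesis using step[OF cA cB s] by blast
  qed
qed

definition cval :: "'a ptree list \<Rightarrow> real" where
  "cval \<sigma> = measure (Pi\<^sub>M (fverts \<sigma>) (\<lambda>_. lborel)) (order_polytope (fverts \<sigma>) (planar_order \<sigma>) 0 1)"

lemma pre_Nil: "pre [] \<sigma> = fverts \<sigma>"
  unfolding pre_def by simp

lemma cval_eq:
  assumes "c \<ge> 0" "emeasure (Pi\<^sub>M (pre [] \<sigma>) (\<lambda>_. lborel))
     (order_polytope (pre [] \<sigma>) (QR (pre [] \<sigma>)) 0 1) = ennreal c"
  shows "cval \<sigma> = c"
  using assms unfolding cval_def measure_def pre_Nil po_eq by simp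

lemma cval:
  fixes \<sigma> :: "'a ptree list"
  shows "cval \<sigma> > 0 \<and> (\<forall>q t. 0 \<le> t \<longrightarrow> emeasure (Pi\<^sub>M (pre q \<sigma>) (\<lambda>_. lborel))
     (order_polytope (pre q \<sigma>) (QR (pre q \<sigma>)) 0 t) = ennreal (t ^ nverts \<sigma> * cval \<sigma>))"
proof -
  obtain c where c: "c > 0" "\<And>q t. 0 \<le> t \<Longrightarrow> emeasure (Pi\<^sub>M (pre q \<sigma>) (\<lambda>_. lborel))
     (order_polytope (pre q \<sigma>) (QR (pre q \<sigma>)) 0 t) = ennreal (t ^ nverts \<sigma> * c)"
    using claim[of \<sigma>] by blast
  have "cval \<sigma> = c" using c(1) c(2)[of 1 "[]"] by (intro cval_eq) auto
  then show ?thesis using c by auto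
qed

lemma pf_cval: "planar_factorial \<sigma> = 1 / cval \<sigma>"
  unfolding planar_factorial_def poset_factorial_def cval_def ..

lemma pf_snoc:
  fixes \<sigma> cs :: "'a ptree list"
  shows "planar_factorial (\<sigma> @ [Node a cs]) = real (nverts (\<sigma> @ [Node a cs])) * planar_factorial \<sigma> * planar_factorial cs"
proof -
  have A: "cval \<sigma> > 0" "\<And>q t. 0 \<le> t \<Longrightarrow> emeasure (Pi\<^sub>M (pre q \<sigma>) (\<lambda>_. lborel))
     (order_polytope (pre q \<sigma>) (QR (pre q \<sigma>)) 0 t) = ennreal (t ^ nverts \<sigma> * cval \<sigma>)"
    using cval[of \<sigma>] by auto
  have B: "cval cs > 0" "\<And>q t. 0 \<le> t \<Longrightarrow> emeasure (Pi\<^sub>M (pre q cs) (\<lambda>_. lborel))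
     (order_polytope (pre q cs) (QR (pre q cs)) 0 t) = ennreal (t ^ nverts cs * cval cs)"
    using cval[of cs] by auto
  note st = step[OF A B refl, of a]
  let ?N = "real (nverts (\<sigma> @ [Node a cs]))"
  have eq: "cval (\<sigma> @ [Node a cs]) = cval \<sigma> * cval cs / ?N"
    using st by (intro cval_eq) auto
  have "?N > 0"
  proof -
    have "fverts (\<sigma> @ [Node a cs]) \<noteq> {}" by (simp add: fverts_snoc)
    moreover have "finite (fverts (\<sigma> @ [Node a cs]))" by (simp add: fverts_def fv_finite)
    ultimately show ?thesis by (simp add: nverts_def card_gt_0_iff)
  qed
  show ?thesis unfolding pf_cval eq by simp
qed

theorem mainTheorem9:
  fixes \<sigma> :: "'a ptree list"
  shows "planar_factorial \<sigma> =
           (\<Prod>j=1..length \<sigma>. real (nverts (take j \<sigma>))) *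
           (\<Prod>j<length \<sigma>. planar_factorial (children (\<sigma> ! j)))"
proof (induction \<sigma> rule: rev_induct)
  case Nil
  have "cval ([] :: 'a ptree list) = 1"
    by (intro cval_eq) (simp_all add: pre_nil op_empty)
  then show ?case by (simp add: pf_cval)
next
  case (snoc x \<sigma>)
  obtain a cs where x: "x = Node a cs" by (cases x)
  have p1: "(\<Prod>j=1..length (\<sigma> @ [x]). real (nverts (take j (\<sigma> @ [x]))))
      = (\<Prod>j=1..length \<sigma>. real (nverts (take j \<sigma>))) * real (nverts (\<sigma> @ [x]))"
  proof -
    have "(\<Prod>j=1..length (\<sigma> @ [x]). real (nverts (take j (\<sigma> @ [x]))))
       = real (nverts (take (Suc (length \<sigma>)) (\<sigma> @ [x]))) * (\<Prod>j=1..length \<sigma>. real (nverts (take j (\<sigma> @ [x]))))"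
      by (simp only: length_append_singleton) (rule prod.nat_ivl_Suc', simp)
    also have "(\<Prod>j=1..length \<sigma>. real (nverts (take j (\<sigma> @ [x])))) = (\<Prod>j=1..length \<sigma>. real (nverts (take j \<sigma>)))"
      by (rule prod.cong) auto
    finally show ?thesis by simp
  qed
  have p2: "(\<Prod>j<length (\<sigma> @ [x]). planar_factorial (children ((\<sigma> @ [x]) ! j)))
      = (\<Prod>j<length \<sigma>. planar_factorial (children (\<sigma> ! j))) * planar_factorial cs"
  proof -
    have "(\<Prod>j<length (\<sigma> @ [x]). planar_factorial (children ((\<sigma> @ [x]) ! j)))
      = (\<Prod>j<length \<sigma>. planar_factorial (children ((\<sigma> @ [x]) ! j))) * planar_factorial (children ((\<sigma> @ [x]) ! length \<sigma>))"
      by (simp only: length_append_singleton prod.lessThan_Suc)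
    also have "(\<Prod>j<length \<sigma>. planar_factorial (children ((\<sigma> @ [x]) ! j))) = (\<Prod>j<length \<sigma>. planar_factorial (children (\<sigma> ! j)))"
      by (rule prod.cong) (auto simp: nth_append)
    finally show ?thesis by (simp add: x)
  qed
  have p3: "planar_factorial (\<sigma> @ [x]) = real (nverts (\<sigma> @ [x])) * planar_factorial \<sigma> * planar_factorial cs"
    by (simp add: x pf_snoc)
  show ?case unfolding p1 p2 p3 snoc.IH by (simp add: mult_ac)
qed

end
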